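(* Let $A=\mathbb{C}[x_1,\dots,x_M,\xi_1,\dots,\xi_N]$ be the free commutative superalgebra on even variables $x_1,\dots,x_M$ and odd variables $\xi_1,\dots,\xi_N$, and let $A^\circ=\mathbb{C}[x_1,\dots,x_M]$ be its quotient by the ideal generated by the odd variables. Let $q_1,\dots,q_n\in A$ be even elements with images $q_1^\circ,\dots,q_n^\circ\in A^\circ$. Assume: whenever $f_1^\circ,\dots,f_n^\circ\in A^\circ$ satisfy $\sum_i q_i^\circ f_i^\circ=0$, there exist $F^\circ_{ij}\in A^\circ$ with $F^\circ_{ij}=-F^\circ_{ji}$ and $f_i^\circ=\sum_jF^\circ_{ij}q_j^\circ$ for all $i$. Then whenever $f_1,\dots,f_n\in A$ satisfy $\sum_iq_if_i=0$, there exist $F_{ij}\in A$ with $F_{ij}=-F_{ji}$ ($i,j=1,\dots,n$) and $f_i=\sum_jF_{ij}q_j$ for all $i$. *)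

theory Defs
  imports Complex_Main "HOL-Library.Poly_Mapping" "HOL-Library.Function_Algebras"
begin

text \<open>Commutative polynomials over the complex numbers in even variables x_0, x_1, ...:
  a monomial is an exponent vector; a polynomial is a finitely
  supported map from monomials to coefficients (convolution product).\<close>
type_synonym cpoly = "(nat \<Rightarrow>\<^sub>0 nat) \<Rightarrow>\<^sub>0 complex"

definition in_Acirc :: "nat \<Rightarrow> cpoly \<Rightarrow> bool" where
  "in_Acirc M p \<longleftrightarrow> (\<forall>m \<in> Poly_Mapping.keys p. Poly_Mapping.keys m \<subseteq> {..<M})"

text \<open>Elements of the free commutative superalgebra: an element is written
  sum over finite sets S of odd indices of  p_S * xi_S, where xi_S is the product of
  the xi_s, s in S, in increasing order. We represent it by the coefficient
  function S \<mapsto> p_S.\<close>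
type_synonym salg = "nat set \<Rightarrow> cpoly"

definition in_A :: "nat \<Rightarrow> nat \<Rightarrow> salg \<Rightarrow> bool" where
  "in_A M N f \<longleftrightarrow> (\<forall>S. f S \<noteq> 0 \<longrightarrow> S \<subseteq> {..<N}) \<and> (\<forall>S. in_Acirc M (f S))"

text \<open>Sign arising from xi_T * xi_U = sgn T U * xi_(T \<union> U) for disjoint T, U.\<close>
definition sa_sign :: "nat set \<Rightarrow> nat set \<Rightarrow> cpoly" where
  "sa_sign T U = (- 1) ^ card {(t, u). t \<in> T \<and> u \<in> U \<and> u < t}"

text \<open>Product in the superalgebra (odd variables anticommute, square to zero).\<close>
definition sa_mult :: "salg \<Rightarrow> salg \<Rightarrow> salg" where
  "sa_mult f g S = (\<Sum>T | T \<subseteq> S. sa_sign T (S - T) * (f T * g (S - T)))"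

definition sa_even :: "salg \<Rightarrow> bool" where
  "sa_even f \<longleftrightarrow> (\<forall>S. odd (card S) \<longrightarrow> f S = 0)"

text \<open>The quotient map A \<rightarrow> A0 modulo the ideal generated by the odd variables.\<close>
definition sa_red :: "salg \<Rightarrow> cpoly" where
  "sa_red f = f {}"

end

theory Submission imports Defs begin

lemma Ac_0[simp]: "in_Acirc M 0" by (simp add: in_Acirc_def)
lemma Ac_1[simp]: "in_Acirc M 1" by (simp add: in_Acirc_def)
lemma Ac_add[intro]: "in_Acirc M p \<Longrightarrow> in_Acirc M q \<Longrightarrow> in_Acirc M (p + q)"
  unfolding in_Acirc_def
proof
  fix m :: "nat \<Rightarrow>\<^sub>0 nat"
  assume a: "\<forall>m\<in>Poly_Mapping.keys p. Poly_Mapping.keys m \<subseteq> {..<M}" "\<forall>m\<in>Poly_Mapping.keys q. Poly_Mapping.keys m \<subseteq> {..<M}" and m: "m \<in> Poly_Mapping.keys (p+q)"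
  then have "m \<in> Poly_Mapping.keys p \<or> m \<in> Poly_Mapping.keys q" using keys_add[of p q] by blast
  then show "Poly_Mapping.keys m \<subseteq> {..<M}" using a by blast
qed
lemma Ac_uminus[intro]: "in_Acirc M p \<Longrightarrow> in_Acirc M (- p)"
  unfolding in_Acirc_def by (simp add: keys_def)
lemma Ac_diff[intro]: "in_Acirc M p \<Longrightarrow> in_Acirc M q \<Longrightarrow> in_Acirc M (p - q)"
  using Ac_add[of M p "-q"] Ac_uminus[of M q] by simp
lemma Ac_mult[intro]: "in_Acirc M p \<Longrightarrow> in_Acirc M q \<Longrightarrow> in_Acirc M (p * q)"
  unfolding in_Acirc_def
proof
  fix m :: "nat \<Rightarrow>\<^sub>0 nat"
  assume a: "\<forall>m\<in>Poly_Mapping.keys p. Poly_Mapping.keys m \<subseteq> {..<M}" "\<forall>m\<in>Poly_Mapping.keys q. Poly_Mapping.keys m \<subseteq> {..<M}" and m: "m \<in> Poly_Mapping.keys (p*q)"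
  then obtain x y where "m = x + y" "x \<in> Poly_Mapping.keys p" "y \<in> Poly_Mapping.keys q" using keys_mult by blast
  then show "Poly_Mapping.keys m \<subseteq> {..<M}" using a keys_add[of x y] by blast
qed
lemma Ac_sum[intro]: "(\<And>i. i \<in> A \<Longrightarrow> in_Acirc M (f i)) \<Longrightarrow> in_Acirc M (\<Sum>i\<in>A. f i)"
  by (induction A rule: infinite_finite_induct) auto
lemma Ac_pow[intro]: "in_Acirc M p \<Longrightarrow> in_Acirc M (p ^ k)"
  by (induction k) auto
lemma Ac_sign[simp]: "in_Acirc M (sa_sign T U)"
  unfolding sa_sign_def by (intro Ac_pow Ac_uminus Ac_1)

lemma cpoly_self_neg: "(a::cpoly) = - a \<Longrightarrow> a = 0"
proof (rule poly_mapping_eqI)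
  fix k assume h: "a = - a"
  have "Poly_Mapping.lookup a k = Poly_Mapping.lookup (- a) k" using h by (rule arg_cong[where f="\<lambda>x. Poly_Mapping.lookup x k"])
  also have "\<dots> = - Poly_Mapping.lookup a k" by (rule lookup_uminus)
  finally have "Poly_Mapping.lookup a k = 0" by simp
  then show "Poly_Mapping.lookup a k = Poly_Mapping.lookup 0 k" by simp
qed

lemma sum_fun_app: "(\<Sum>j\<in>A. F j) x = (\<Sum>j\<in>A. F j x)"
  by (induction A rule: infinite_finite_induct) auto

lemma sa_mult_Pow: "sa_mult f g S = (\<Sum>T\<in>Pow S. sa_sign T (S-T) * (f T * g (S-T)))"
  by (simp add: sa_mult_def Pow_def)

lemma sa_mult_inf: "infinite S \<Longrightarrow> sa_mult f g S = 0"
  unfolding sa_mult_Pow by simp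

lemma sa_mult_zero_left[simp]: "sa_mult 0 g = 0"
  by (rule ext) (simp add: sa_mult_def)
lemma sa_mult_zero_right[simp]: "sa_mult f 0 = 0"
  by (rule ext) (simp add: sa_mult_def)
lemma sa_mult_add_left: "sa_mult (f + h) g = sa_mult f g + sa_mult h g"
  by (rule ext) (simp add: sa_mult_def sum.distrib[symmetric] ring_distribs)
lemma sa_mult_add_right: "sa_mult f (g + h) = sa_mult f g + sa_mult f h"
  by (rule ext) (simp add: sa_mult_def sum.distrib[symmetric] ring_distribs)
lemma sa_mult_uminus_left: "sa_mult (- f) g = - sa_mult f g"
  by (rule ext) (simp add: sa_mult_def sum_negf[symmetric])
lemma sa_mult_uminus_right: "sa_mult f (- g) = - sa_mult f g"
  by (rule ext) (simp add: sa_mult_def sum_negf[symmetric])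
lemma sa_mult_diff_right: "sa_mult f (g - h) = sa_mult f g - sa_mult f h"
  using sa_mult_add_right[of f g "-h"] sa_mult_uminus_right[of f h] by simp
lemma sa_mult_sum_left: "sa_mult (\<Sum>j\<in>A. F j) g = (\<Sum>j\<in>A. sa_mult (F j) g)"
proof (induction A rule: infinite_finite_induct)
  case (infinite A) then show ?case by (metis sa_mult_zero_left sum.infinite)
next
  case empty then show ?case by (metis sa_mult_zero_left sum.empty)
next
  case (insert x A) then show ?case by (metis sum.insert sa_mult_add_left)
qed
lemma sa_mult_sum_right: "sa_mult f (\<Sum>j\<in>A. F j) = (\<Sum>j\<in>A. sa_mult f (F j))"
proof (induction A rule: infinite_finite_induct)
  case (infinite A) then show ?case by (metis sa_mult_zero_right sum.infinite)
next
  case empty then show ?case by (metis sa_mult_zero_right sum.empty)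
next
  case (insert x A) then show ?case by (metis sum.insert sa_mult_add_right)
qed

definition inv_set :: "nat set \<Rightarrow> nat set \<Rightarrow> (nat \<times> nat) set" where
  "inv_set T U = {(t, u). t \<in> T \<and> u \<in> U \<and> u < t}"

lemma sign_inv: "sa_sign T U = (-1) ^ card (inv_set T U)"
  by (simp add: sa_sign_def inv_set_def)

lemma inv_set_fin: "finite T \<Longrightarrow> finite U \<Longrightarrow> finite (inv_set T U)"
  by (rule finite_subset[of _ "T \<times> U"]) (auto simp: inv_set_def)

lemma sign_Un_left:
  assumes "finite A" "finite B" "finite C" "A \<inter> B = {}"
  shows "sa_sign (A \<union> B) C = sa_sign A C * sa_sign B C"
proof -
  have "inv_set (A \<union> B) C = inv_set A C \<union> inv_set B C" by (auto simp: inv_set_def)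
  moreover have "inv_set A C \<inter> inv_set B C = {}" using assms(4) by (auto simp: inv_set_def)
  ultimately have "card (inv_set (A \<union> B) C) = card (inv_set A C) + card (inv_set B C)"
    using card_Un_disjoint inv_set_fin assms by metis
  then show ?thesis by (simp add: sign_inv power_add)
qed

lemma sign_Un_right:
  assumes "finite A" "finite B" "finite C" "B \<inter> C = {}"
  shows "sa_sign A (B \<union> C) = sa_sign A B * sa_sign A C"
proof -
  have "inv_set A (B \<union> C) = inv_set A B \<union> inv_set A C" by (auto simp: inv_set_def)
  moreover have "inv_set A B \<inter> inv_set A C = {}" using assms(4) by (auto simp: inv_set_def)
  ultimately have "card (inv_set A (B \<union> C)) = card (inv_set A B) + card (inv_set A C)"
    using card_Un_disjoint inv_set_fin assms by metis
  then show ?thesis by (simp add: sign_inv power_add)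
qed

lemma sign_empty_left[simp]: "sa_sign {} U = 1" by (simp add: sa_sign_def)
lemma sign_empty_right[simp]: "sa_sign T {} = 1" by (simp add: sa_sign_def)

lemma sign_sq: "sa_sign T U * sa_sign T U = 1"
  by (simp add: sa_sign_def power_add[symmetric])

lemma sign_swap:
  assumes "finite T" "finite U" "T \<inter> U = {}"
  shows "sa_sign U T * sa_sign T U = (-1) ^ (card T * card U)"
proof -
  have e: "inv_set U T = prod.swap ` {(t, u). t \<in> T \<and> u \<in> U \<and> t < u}"
    by (auto simp: inv_set_def image_iff)
  have c1: "card (inv_set U T) = card {(t, u). t \<in> T \<and> u \<in> U \<and> t < u}"
    unfolding e by (rule card_image) simp
  have un: "T \<times> U = inv_set T U \<union> {(t, u). t \<in> T \<and> u \<in> U \<and> t < u}"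
    using assms(3) by (auto simp: inv_set_def)
  have "card (T \<times> U) = card (inv_set T U) + card {(t, u). t \<in> T \<and> u \<in> U \<and> t < u}"
    unfolding un
    by (rule card_Un_disjoint) (auto simp: inv_set_def intro: finite_subset[of _ "T \<times> U"] assms)
  then have "card (inv_set U T) + card (inv_set T U) = card T * card U"
    using c1 by (simp add: card_cartesian_product)
  then show ?thesis by (metis sign_inv power_add)
qed

lemma sa_mult_assoc: "sa_mult (sa_mult f g) h = sa_mult f (sa_mult g h)"
proof (rule ext)
  fix S
  show "sa_mult (sa_mult f g) h S = sa_mult f (sa_mult g h) S"
  proof (cases "finite S")
    case False then show ?thesis by (simp add: sa_mult_inf)
  next
    case fin: True
    define \<phi> where "\<phi> T U = sa_sign U (S-U) * sa_sign T (U-T) * (f T * (g (U-T) * h (S-U)))" for T U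
    have "sa_mult (sa_mult f g) h S = (\<Sum>U\<in>Pow S. \<Sum>T\<in>Pow U. \<phi> T U)"
      unfolding sa_mult_Pow \<phi>_def
      by (simp add: sum_distrib_left sum_distrib_right mult.assoc)
    also have "\<dots> = (\<Sum>U\<in>Pow S. \<Sum>T\<in>{T\<in>Pow S. T \<subseteq> U}. \<phi> T U)"
      by (rule sum.cong) (auto intro!: sum.cong)
    also have "\<dots> = (\<Sum>T\<in>Pow S. \<Sum>U\<in>{U\<in>Pow S. T \<subseteq> U}. \<phi> T U)"
      by (rule sum.swap_restrict) (use fin in auto)
    also have "\<dots> = (\<Sum>T\<in>Pow S. \<Sum>V\<in>Pow (S-T). \<phi> T (T \<union> V))"
    proof (rule sum.cong[OF refl])
      fix T assume T: "T \<in> Pow S"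
      show "(\<Sum>U\<in>{U\<in>Pow S. T \<subseteq> U}. \<phi> T U) = (\<Sum>V\<in>Pow (S-T). \<phi> T (T \<union> V))"
        by (rule sum.reindex_bij_witness[of _ "\<lambda>V. T \<union> V" "\<lambda>U. U - T"]) (use T in \<open>auto simp: Un_absorb1\<close>)
    qed
    also have "\<dots> = sa_mult f (sa_mult g h) S"
      unfolding sa_mult_Pow[of f] sa_mult_Pow[of g]
    proof (rule sum.cong[OF refl])
      fix T assume T: "T \<in> Pow S"
      have "(\<Sum>V\<in>Pow (S-T). \<phi> T (T \<union> V)) =
            (\<Sum>V\<in>Pow (S-T). sa_sign T (S - T) * (f T * (sa_sign V (S - T - V) * (g V * h (S - T - V)))))"
      proof (rule sum.cong[OF refl])
        fix V assume V: "V \<in> Pow (S-T)"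
        define C where "C = S - T - V"
        have fT: "finite T" "finite V" "finite C" using fin T V unfolding C_def by (auto intro: finite_subset)
        have d: "T \<inter> V = {}" "V \<inter> C = {}" "T \<inter> C = {}" using V unfolding C_def by auto
        have e1: "S - (T \<union> V) = C" "T \<union> V - T = V" "S - T = V \<union> C" "V \<union> C - V = C" using V T unfolding C_def by auto
        have s1: "sa_sign (T \<union> V) C = sa_sign T C * sa_sign V C" by (rule sign_Un_left) (use fT d in auto)
        have s2: "sa_sign T (V \<union> C) = sa_sign T V * sa_sign T C" by (rule sign_Un_right) (use fT d in auto)
        show "\<phi> T (T \<union> V) = sa_sign T (S - T) * (f T * (sa_sign V (S - T - V) * (g V * h (S - T - V))))"
          unfolding \<phi>_def e1 C_def[symmetric] s1 s2 by (simp add: algebra_simps)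
      qed
      also have "\<dots> = sa_sign T (S - T) * (f T * (\<Sum>V\<in>Pow (S-T). sa_sign V (S - T - V) * (g V * h (S - T - V))))"
        by (simp add: sum_distrib_left)
      finally show "(\<Sum>V\<in>Pow (S-T). \<phi> T (T \<union> V)) = sa_sign T (S - T) * (f T * (\<Sum>V\<in>Pow (S-T). sa_sign V (S - T - V) * (g V * h (S - T - V))))" .
    qed
    finally show ?thesis .
  qed
qed

lemma sa_mult_comm_even:
  assumes "sa_even f" shows "sa_mult f g = sa_mult g f"
proof (rule ext)
  fix S
  show "sa_mult f g S = sa_mult g f S"
  proof (cases "finite S")
    case False then show ?thesis by (simp add: sa_mult_inf)
  next
    case fin: True
    have "sa_mult g f S = (\<Sum>T\<in>Pow S. sa_sign (S-T) (S-(S-T)) * (g (S-T) * f (S-(S-T))))"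
      unfolding sa_mult_Pow
      by (rule sum.reindex_bij_witness[of _ "\<lambda>U. S - U" "\<lambda>U. S - U"]) (auto simp: double_diff)
    also have "\<dots> = sa_mult f g S"
      unfolding sa_mult_Pow
    proof (rule sum.cong[OF refl])
      fix T assume T: "T \<in> Pow S"
      then have ST: "S - (S - T) = T" by auto
      show "sa_sign (S-T) (S-(S-T)) * (g (S-T) * f (S-(S-T))) = sa_sign T (S - T) * (f T * g (S - T))"
      proof (cases "odd (card T)")
        case True then have "f T = 0" using assms by (simp add: sa_even_def)
        then show ?thesis unfolding ST by simp
      next
        case False
        have fT: "finite T" "finite (S - T)" using fin T finite_subset by auto
        have one: "sa_sign (S-T) T * sa_sign T (S-T) = 1"
          using sign_swap[OF fT] False by (simp add: Diff_disjoint)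
        have "sa_sign (S-T) T = sa_sign (S-T) T * (sa_sign T (S-T) * sa_sign T (S-T))"
          by (simp add: sign_sq)
        also have "\<dots> = (sa_sign (S-T) T * sa_sign T (S-T)) * sa_sign T (S-T)"
          by (simp only: mult.assoc)
        also have "\<dots> = sa_sign T (S-T)" by (simp only: one mult_1_left)
        finally have "sa_sign (S-T) T = sa_sign T (S-T)" .
        then show ?thesis unfolding ST by (simp add: algebra_simps)
      qed
    qed
    finally show ?thesis by simp
  qed
qed

lemma inA_0[simp]: "in_A M N 0" by (simp add: in_A_def)
lemma inA_add[intro]: "in_A M N f \<Longrightarrow> in_A M N g \<Longrightarrow> in_A M N (f + g)"
  unfolding in_A_def by (metis Ac_add add.right_neutral plus_fun_apply)
lemma inA_uminus[intro]: "in_A M N f \<Longrightarrow> in_A M N (- f)"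
  unfolding in_A_def by (metis Ac_uminus neg_equal_0_iff_equal fun_Compl_def)
lemma inA_diff[intro]: "in_A M N f \<Longrightarrow> in_A M N g \<Longrightarrow> in_A M N (f - g)"
  using inA_add[of M N f "-g"] inA_uminus[of M N g] by simp
lemma inA_sum[intro]: "(\<And>i. i \<in> A \<Longrightarrow> in_A M N (f i)) \<Longrightarrow> in_A M N (\<Sum>i\<in>A. f i)"
proof (induction A rule: infinite_finite_induct)
  case (insert x A)
  have "in_A M N (f x + sum f A)"
    by (rule inA_add) (use insert in auto)
  then show ?case by (simp only: sum.insert[OF insert(1,2)])
qed simp_all
lemma inA_mult[intro]: "in_A M N f \<Longrightarrow> in_A M N g \<Longrightarrow> in_A M N (sa_mult f g)"
proof -
  assume f: "in_A M N f" and g: "in_A M N g"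
  have "S \<subseteq> {..<N}" if "sa_mult f g S \<noteq> 0" for S
  proof -
    from that obtain T where T: "T \<subseteq> S" "sa_sign T (S-T) * (f T * g (S-T)) \<noteq> 0"
      unfolding sa_mult_def using sum.not_neutral_contains_not_neutral by force
    then have "f T \<noteq> 0" "g (S - T) \<noteq> 0" by auto
    then have "T \<subseteq> {..<N}" "S - T \<subseteq> {..<N}" using f g by (auto simp: in_A_def)
    then show ?thesis by blast
  qed
  moreover have "in_Acirc M (sa_mult f g S)" for S
    unfolding sa_mult_def using f g by (intro Ac_sum Ac_mult) (auto simp: in_A_def)
  ultimately show ?thesis by (simp add: in_A_def)
qed

lemma syz:
  assumes ev: "\<forall>i<n. sa_even (q i)" and G: "\<forall>i<n. \<forall>j<n. G i j = - G j i"
  shows "(\<Sum>i<n. sa_mult (q i) (\<Sum>j<n. sa_mult (G i j) (q j))) = 0"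
proof -
  define X where "X i j = sa_mult (G i j) (sa_mult (q i) (q j))" for i j
  have 1: "sa_mult (q i) (sa_mult (G i j) (q j)) = X i j" if "i < n" "j < n" for i j
    using ev that unfolding X_def
    by (metis sa_mult_assoc sa_mult_comm_even)
  have 2: "X j i = - X i j" if "i < n" "j < n" for i j
    using ev that G unfolding X_def
    by (metis sa_mult_comm_even sa_mult_uminus_left)
  define \<Sigma> where "\<Sigma> = (\<Sum>i<n. \<Sum>j<n. X i j)"
  have e: "(\<Sum>i<n. sa_mult (q i) (\<Sum>j<n. sa_mult (G i j) (q j))) = \<Sigma>"
    unfolding \<Sigma>_def sa_mult_sum_right by (intro sum.cong refl) (simp add: 1)
  have "\<Sigma> = (\<Sum>j<n. \<Sum>i<n. X i j)" unfolding \<Sigma>_def by (rule sum.swap)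
  also have "\<dots> = (\<Sum>j<n. \<Sum>i<n. - X j i)"
  proof (intro sum.cong refl)
    fix j i assume "j \<in> {..<n}" "i \<in> {..<n}"
    then show "X i j = - X j i" using 2[of j i] by simp
  qed
  also have "\<dots> = - \<Sigma>" unfolding \<Sigma>_def by (simp add: sum_negf)
  finally have "\<Sigma> = - \<Sigma>" .
  then have "\<Sigma> = 0"
  proof (intro ext)
    fix x assume h: "\<Sigma> = - \<Sigma>"
    have "\<Sigma> x = (- \<Sigma>) x" using h by (rule arg_cong[where f="\<lambda>h. h x"])
    then have "\<Sigma> x = - \<Sigma> x" by (simp only: uminus_apply)
    then have "\<Sigma> x = 0" by (rule cpoly_self_neg)
    then show "\<Sigma> x = 0 x" by (simp only: zero_fun_apply)
  qed
  then show ?thesis using e by simp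
qed

lemma sum_eq_single:
  fixes g :: "'a \<Rightarrow> 'b::comm_monoid_add"
  assumes "\<And>x. x \<in> A \<Longrightarrow> x \<noteq> a \<Longrightarrow> g x = 0" "finite A" "a \<in> A"
  shows "sum g A = g a"
proof -
  have "sum g A = g a + sum g (A - {a})" using assms(2,3) by (rule sum.remove)
  also have "sum g (A - {a}) = 0" using assms(1) by (intro sum.neutral) auto
  finally show ?thesis by simp
qed

definition low :: "nat \<Rightarrow> salg \<Rightarrow> bool" where
  "low k f \<longleftrightarrow> (\<forall>T. finite T \<and> card T < k \<longrightarrow> f T = 0)"

lemma low_mult:
  assumes "low k g" "finite S" "card S = k"
  shows "sa_mult p g S = p {} * g S"
proof -
  have "sa_mult p g S = (\<Sum>T\<in>Pow S. sa_sign T (S-T) * (p T * g (S-T)))" by (rule sa_mult_Pow)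
  also have "\<dots> = sa_sign {} (S-{}) * (p {} * g (S-{}))"
  proof (rule sum_eq_single)
    fix T assume T: "T \<in> Pow S" "T \<noteq> {}"
    have TS: "T \<subseteq> S" using T by auto
    have fT: "finite T" using TS assms(2) by (rule finite_subset)
    have c0: "card T > 0" using fT T(2) by (simp add: card_gt_0_iff)
    have c1: "card T \<le> card S" using assms(2) TS by (rule card_mono)
    have "card (S - T) = card S - card T" using fT TS by (rule card_Diff_subset)
    then have "card (S - T) < k" using c0 c1 assms(3) by linarith
    then have "g (S - T) = 0" using assms T by (auto simp: low_def)
    then show "sa_sign T (S-T) * (p T * g (S-T)) = 0" by simp
  qed (use assms in auto)
  finally show ?thesis by simp
qed

lemma step:
  fixes M N n k :: nat and q f :: "nat \<Rightarrow> salg"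
  assumes q_in: "\<forall>i<n. in_A M N (q i) \<and> sa_even (q i)"
    and hyp: "\<forall>fc :: nat \<Rightarrow> cpoly.
       (\<forall>i<n. in_Acirc M (fc i)) \<and> (\<Sum>i<n. sa_red (q i) * fc i) = 0 \<longrightarrow>
       (\<exists>F :: nat \<Rightarrow> nat \<Rightarrow> cpoly.
          (\<forall>i<n. \<forall>j<n. in_Acirc M (F i j) \<and> F i j = - F j i) \<and>
          (\<forall>i<n. fc i = (\<Sum>j<n. F i j * sa_red (q j))))"
    and f_in: "\<forall>i<n. in_A M N (f i)" and f0: "(\<Sum>i<n. sa_mult (q i) (f i)) = 0"
    and fl: "\<forall>i<n. low k (f i)"
  shows "\<exists>G. (\<forall>i<n. \<forall>j<n. in_A M N (G i j) \<and> G i j = - G j i) \<and>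
             (\<forall>i<n. low (Suc k) (f i - (\<Sum>j<n. sa_mult (G i j) (q j))))"
proof -
  define P where "P S F \<longleftrightarrow> (\<forall>i<n. \<forall>j<n. in_Acirc M (F i j) \<and> F i j = - F j i) \<and>
          (\<forall>i<n. f i S = (\<Sum>j<n. F i j * sa_red (q j)))" for S and F :: "nat \<Rightarrow> nat \<Rightarrow> cpoly"
  have ex: "\<exists>F. P S F" if S: "finite S" "card S = k" for S
  proof -
    have "(\<Sum>i<n. sa_red (q i) * f i S) = (\<Sum>i<n. sa_mult (q i) (f i) S)"
    proof (rule sum.cong[OF refl])
      fix i assume "i \<in> {..<n}"
      then have "low k (f i)" using fl by auto
      then show "sa_red (q i) * f i S = sa_mult (q i) (f i) S"
        using S by (simp add: low_mult sa_red_def)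
    qed
    also have "\<dots> = (\<Sum>i<n. sa_mult (q i) (f i)) S" by (simp add: sum_fun_app)
    finally have "(\<Sum>i<n. sa_red (q i) * f i S) = 0" using f0 by simp
    moreover have "\<forall>i<n. in_Acirc M (f i S)" using f_in by (simp add: in_A_def)
    ultimately show ?thesis using hyp[rule_format, of "\<lambda>i. f i S"] unfolding P_def by blast
  qed
  define FF where "FF S = (SOME F. P S F)" for S
  have PF: "P S (FF S)" if "finite S" "card S = k" for S
    unfolding FF_def using ex[OF that] by (rule someI_ex)
  define G where "G i j S = (if finite S \<and> card S = k \<and> S \<subseteq> {..<N} then FF S i j else 0)" for i j S
  have G_in: "in_A M N (G i j)" if "i < n" "j < n" for i j
    unfolding in_A_def
  proof (intro conjI allI impI)
    fix S assume "G i j S \<noteq> 0" then show "S \<subseteq> {..<N}" by (simp add: G_def split: if_splits)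
  next
    fix S show "in_Acirc M (G i j S)"
    proof (cases "finite S \<and> card S = k \<and> S \<subseteq> {..<N}")
      case True then have "P S (FF S)" by (intro PF) auto
      then have "in_Acirc M (FF S i j)" using that unfolding P_def by blast
      then show ?thesis using True by (simp add: G_def)
    next
      case False then show ?thesis by (auto simp: G_def)
    qed
  qed
  have G_anti: "G i j = - G j i" if "i < n" "j < n" for i j
  proof (rule ext)
    fix S show "G i j S = (- G j i) S"
    proof (cases "finite S \<and> card S = k \<and> S \<subseteq> {..<N}")
      case True then have "P S (FF S)" by (intro PF) auto
      then have h: "FF S i j = - FF S j i" using that unfolding P_def by blast
      have e1: "G i j S = FF S i j" "G j i S = FF S j i" using True by (simp_all add: G_def)
      show ?thesis unfolding uminus_apply e1 by (rule h)
    next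
      case False then show ?thesis by (auto simp: G_def)
    qed
  qed
  have Gm: "sa_mult (G i j) (q j) T = (if card T = k \<and> T \<subseteq> {..<N} then FF T i j * q j {} else 0)"
    if T: "finite T" "card T \<le> k" for i j T
  proof -
    have "sa_mult (G i j) (q j) T = (\<Sum>U\<in>Pow T. sa_sign U (T-U) * (G i j U * q j (T-U)))"
      by (rule sa_mult_Pow)
    also have "\<dots> = sa_sign T (T-T) * (G i j T * q j (T-T))"
    proof (rule sum_eq_single)
      fix U assume U: "U \<in> Pow T" "U \<noteq> T"
      then have "card U < card T" using T by (auto intro: psubset_card_mono)
      then have "G i j U = 0" using T by (simp add: G_def)
      then show "sa_sign U (T-U) * (G i j U * q j (T-U)) = 0" by simp
    qed (use T in auto)
    finally show ?thesis using T by (simp add: G_def)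
  qed
  have low2: "low (Suc k) (f i - (\<Sum>j<n. sa_mult (G i j) (q j)))" if i: "i < n" for i
    unfolding low_def
  proof (intro allI impI)
    fix T :: "nat set" assume T: "finite T \<and> card T < Suc k"
    then have T': "finite T" "card T \<le> k" by auto
    have e: "(f i - (\<Sum>j<n. sa_mult (G i j) (q j))) T = f i T - (\<Sum>j<n. sa_mult (G i j) (q j) T)"
      by (simp add: sum_fun_app)
    show "(f i - (\<Sum>j<n. sa_mult (G i j) (q j))) T = 0"
    proof (cases "card T = k \<and> T \<subseteq> {..<N}")
      case True
      then have "P T (FF T)" using T' by (intro PF) auto
      then have "f i T = (\<Sum>j<n. FF T i j * sa_red (q j))" using i unfolding P_def by blast
      then have "f i T = (\<Sum>j<n. FF T i j * q j {})" by (simp add: sa_red_def)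
      then show ?thesis unfolding e using True T' by (simp add: Gm)
    next
      case False
      have "f i T = 0"
      proof (cases "card T = k")
        case True then have "\<not> T \<subseteq> {..<N}" using False by simp
        then show ?thesis using f_in i by (auto simp: in_A_def)
      next
        case False then show ?thesis using fl i T' by (simp add: low_def)
      qed
      moreover have "sa_mult (G i j) (q j) T = 0" for j
        using Gm[OF T', of i j] by (simp only: if_not_P[OF False])
      ultimately show ?thesis unfolding e by simp
    qed
  qed
  show ?thesis using G_in G_anti low2 by blast
qed

theorem mainTheorem4:
  fixes M N n :: nat and q :: "nat \<Rightarrow> salg"
  assumes q_in: "\<forall>i<n. in_A M N (q i) \<and> sa_even (q i)"
    and hyp: "\<forall>fc :: nat \<Rightarrow> cpoly.
       (\<forall>i<n. in_Acirc M (fc i)) \<and> (\<Sum>i<n. sa_red (q i) * fc i) = 0 \<longrightarrow>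
       (\<exists>F :: nat \<Rightarrow> nat \<Rightarrow> cpoly.
          (\<forall>i<n. \<forall>j<n. in_Acirc M (F i j) \<and> F i j = - F j i) \<and>
          (\<forall>i<n. fc i = (\<Sum>j<n. F i j * sa_red (q j))))"
  shows "\<forall>f :: nat \<Rightarrow> salg.
       (\<forall>i<n. in_A M N (f i)) \<and> (\<Sum>i<n. sa_mult (q i) (f i)) = 0 \<longrightarrow>
       (\<exists>F :: nat \<Rightarrow> nat \<Rightarrow> salg.
          (\<forall>i<n. \<forall>j<n. in_A M N (F i j) \<and> F i j = - F j i) \<and>
          (\<forall>i<n. f i = (\<Sum>j<n. sa_mult (F i j) (q j))))"
proof -
  have main: "\<forall>f :: nat \<Rightarrow> salg.
       (\<forall>i<n. in_A M N (f i)) \<and> (\<Sum>i<n. sa_mult (q i) (f i)) = 0 \<and> (\<forall>i<n. low (N + 1 - m) (f i)) \<longrightarrow>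
       (\<exists>F :: nat \<Rightarrow> nat \<Rightarrow> salg.
          (\<forall>i<n. \<forall>j<n. in_A M N (F i j) \<and> F i j = - F j i) \<and>
          (\<forall>i<n. f i = (\<Sum>j<n. sa_mult (F i j) (q j))))" for m
  proof (induction m)
    case 0
    show ?case
    proof (intro allI impI)
      fix f :: "nat \<Rightarrow> salg"
      assume a: "(\<forall>i<n. in_A M N (f i)) \<and> (\<Sum>i<n. sa_mult (q i) (f i)) = 0 \<and> (\<forall>i<n. low (N + 1 - 0) (f i))"
      have z: "f i = 0" if i: "i < n" for i
      proof -
        have "f i S = 0" for S
        proof (rule ccontr)
          assume nz: "f i S \<noteq> 0"
          then have "S \<subseteq> {..<N}" using a i by (auto simp: in_A_def)
          then have "finite S" "card S < N + 1"
            using finite_subset card_mono[of "{..<N}" S] by fastforce+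
          then show False using a i nz by (auto simp: low_def)
        qed
        then show ?thesis by (simp add: fun_eq_iff)
      qed
      show "\<exists>F :: nat \<Rightarrow> nat \<Rightarrow> salg.
          (\<forall>i<n. \<forall>j<n. in_A M N (F i j) \<and> F i j = - F j i) \<and>
          (\<forall>i<n. f i = (\<Sum>j<n. sa_mult (F i j) (q j)))"
        by (rule exI[of _ "\<lambda>i j. 0"]) (simp add: z)
    qed
  next
    case (Suc m)
    show ?case
    proof (intro allI impI)
      fix f :: "nat \<Rightarrow> salg"
      assume a: "(\<forall>i<n. in_A M N (f i)) \<and> (\<Sum>i<n. sa_mult (q i) (f i)) = 0 \<and> (\<forall>i<n. low (N + 1 - Suc m) (f i))"
      have a1: "\<forall>i<n. in_A M N (f i)" using a by (rule conjunct1)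
      have a2: "(\<Sum>i<n. sa_mult (q i) (f i)) = 0" using a by (rule conjunct1[OF conjunct2])
      have a3: "\<forall>i<n. low (N + 1 - Suc m) (f i)" using a by (rule conjunct2[OF conjunct2])
      have exG: "\<exists>G. (\<forall>i<n. \<forall>j<n. in_A M N (G i j) \<and> G i j = - G j i) \<and>
             (\<forall>i<n. low (Suc (N + 1 - Suc m)) (f i - (\<Sum>j<n. sa_mult (G i j) (q j))))"
        by (rule step[OF q_in hyp a1 a2 a3])
      then obtain G where GG: "(\<forall>i<n. \<forall>j<n. in_A M N (G i j) \<and> G i j = - G j i) \<and>
             (\<forall>i<n. low (Suc (N + 1 - Suc m)) (f i - (\<Sum>j<n. sa_mult (G i j) (q j))))"
        by (elim exE) (rule that)
      have G: "\<forall>i<n. \<forall>j<n. in_A M N (G i j) \<and> G i j = - G j i" using GG by (rule conjunct1)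
      have Gl: "\<forall>i<n. low (Suc (N + 1 - Suc m)) (f i - (\<Sum>j<n. sa_mult (G i j) (q j)))" using GG by (rule conjunct2)
      have Gin: "in_A M N (G i j)" if "i < n" "j < n" for i j using G[rule_format, OF that] by (rule conjunct1)
      have Gan: "G i j = - G j i" if "i < n" "j < n" for i j using G[rule_format, OF that] by (rule conjunct2)
      have ev: "\<forall>i<n. sa_even (q i)" using q_in by simp
      define f2 where "f2 i = f i - (\<Sum>j<n. sa_mult (G i j) (q j))" for i
      have f2_in: "\<forall>i<n. in_A M N (f2 i)"
      proof (intro allI impI)
        fix i assume i: "i < n"
        show "in_A M N (f2 i)" unfolding f2_def
        proof (intro inA_diff inA_sum inA_mult)
          show "in_A M N (f i)" using a1 i by simp
        next
          fix j assume "j \<in> {..<n}"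
          then show "in_A M N (G i j)" "in_A M N (q j)" using Gin i q_in by auto
        qed
      qed
      have Gan': "\<forall>i<n. \<forall>j<n. G i j = - G j i" by (intro allI impI Gan)
      have h1: "(\<Sum>i<n. sa_mult (q i) (f2 i)) = (\<Sum>i<n. sa_mult (q i) (f i)) - (\<Sum>i<n. sa_mult (q i) (\<Sum>j<n. sa_mult (G i j) (q j)))"
        unfolding f2_def sa_mult_diff_right by (simp add: sum_subtractf)
      have h2: "(\<Sum>i<n. sa_mult (q i) (\<Sum>j<n. sa_mult (G i j) (q j))) = 0" by (rule syz[OF ev Gan'])
      have f2_0: "(\<Sum>i<n. sa_mult (q i) (f2 i)) = 0" unfolding h1 h2 a2 by simp
      have f2_low: "\<forall>i<n. low (N + 1 - m) (f2 i)"
      proof (intro allI impI)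
        fix i assume "i < n"
        then have "low (Suc (N + 1 - Suc m)) (f2 i)" using Gl unfolding f2_def by simp
        moreover have "N + 1 - m \<le> Suc (N + 1 - Suc m)" by arith
        ultimately show "low (N + 1 - m) (f2 i)" unfolding low_def by (meson less_le_trans)
      qed
      have exF: "\<exists>F :: nat \<Rightarrow> nat \<Rightarrow> salg.
          (\<forall>i<n. \<forall>j<n. in_A M N (F i j) \<and> F i j = - F j i) \<and>
          (\<forall>i<n. f2 i = (\<Sum>j<n. sa_mult (F i j) (q j)))"
        by (rule Suc.IH[rule_format]) (intro conjI f2_in f2_0 f2_low)
      then obtain F where FF: "(\<forall>i<n. \<forall>j<n. in_A M N (F i j) \<and> F i j = - F j i) \<and>
          (\<forall>i<n. f2 i = (\<Sum>j<n. sa_mult (F i j) (q j)))"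
        by (elim exE) (rule that)
      have F: "\<forall>i<n. \<forall>j<n. in_A M N (F i j) \<and> F i j = - F j i" using FF by (rule conjunct1)
      have Fe: "\<forall>i<n. f2 i = (\<Sum>j<n. sa_mult (F i j) (q j))" using FF by (rule conjunct2)
      show "\<exists>F :: nat \<Rightarrow> nat \<Rightarrow> salg.
          (\<forall>i<n. \<forall>j<n. in_A M N (F i j) \<and> F i j = - F j i) \<and>
          (\<forall>i<n. f i = (\<Sum>j<n. sa_mult (F i j) (q j)))"
      proof (rule exI[of _ "\<lambda>i j. F i j + G i j"], intro conjI allI impI)
        fix i j assume ij: "i < n" "j < n"
        have F1: "in_A M N (F i j)" "F i j = - F j i"
          using F[rule_format, OF ij] by (rule conjunct1, rule conjunct2)
        show "in_A M N (F i j + G i j)" using F1(1) Gin[OF ij] by (rule inA_add)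
        show "F i j + G i j = - (F j i + G j i)" unfolding F1(2) Gan[OF ij] by simp
      next
        fix i assume i: "i < n"
        have "f i = f2 i + (\<Sum>j<n. sa_mult (G i j) (q j))" unfolding f2_def by simp
        also have "\<dots> = (\<Sum>j<n. sa_mult (F i j + G i j) (q j))"
          using Fe i by (simp add: sa_mult_add_left sum.distrib)
        finally show "f i = (\<Sum>j<n. sa_mult (F i j + G i j) (q j))" .
      qed
    qed
  qed
  show ?thesis
  proof (intro allI impI)
    fix f :: "nat \<Rightarrow> salg"
    assume h: "(\<forall>i<n. in_A M N (f i)) \<and> (\<Sum>i<n. sa_mult (q i) (f i)) = 0"
    have l: "\<forall>i<n. low (N + 1 - (N + 1)) (f i)" by (simp add: low_def)
    show "\<exists>F :: nat \<Rightarrow> nat \<Rightarrow> salg.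
          (\<forall>i<n. \<forall>j<n. in_A M N (F i j) \<and> F i j = - F j i) \<and>
          (\<forall>i<n. f i = (\<Sum>j<n. sa_mult (F i j) (q j)))"
      by (rule main[of "N + 1", rule_format]) (intro conjI l conjunct1[OF h] conjunct2[OF h])
  qed
qed

end
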